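(* For every integer $n\ge1$, \[ \sum_{m=1}^{\infty}\frac{(-1)^{m+1}\,2n}{(m+1)(m+2n+1)}H_m=2\ln2\sum_{k=0}^{n-1}\frac{1}{2k+1}-\sum_{j=1}^{2n}\frac1j\sum_{k=1}^{j}\frac{(-1)^{k-1}}{k}. \]
   Context: $H_m=\sum_{j=1}^m 1/j$ is the $m$-th harmonic number. *)

theory Defs
  imports "HOL-Analysis.Analysis"
begin

end

theory Submission
  imports Defs
begin

definition PP :: "nat \<Rightarrow> nat \<Rightarrow> real" where
  "PP N a = (\<Sum>m=1..N. (-1)^(m+1) * harm m / real (m+a))"

definition Alt :: "nat \<Rightarrow> real" where
  "Alt M = (\<Sum>k=1..M. (-1)^(k+1) / real k)"

lemma aux:
  fixes a b c H s :: real assumes "b \<noteq> 0" "c \<noteq> 0"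
  shows "s*H/a + s*H/b = -s/(c*b) + s*(H + 1/c)/b - (-s)*H/a"
  using assms by (simp add: field_simps)

lemma PQ: "PP N j + PP N (Suc j) =
   (\<Sum>m=1..N+1. (-1)^(m+1) / (real m * real (m+j))) + (-1)^(N+1) * harm (N+1) / real (N+1+j)"
proof (induction N)
  case 0
  then show ?case by (simp add: PP_def harm_def)
next
  case (Suc N)
  have e1: "PP (Suc N) j = PP N j + (-1)^(N+2) * harm (N+1) / real (N+1+j)"
    by (simp add: PP_def)
  have e2: "PP (Suc N) (Suc j) = PP N (Suc j) + (-1)^(N+2) * harm (N+1) / real (N+2+j)"
    by (simp add: PP_def)
  have e3: "(\<Sum>m=1..Suc N+1. (-1)^(m+1) / (real m * real (m+j))) =
     (\<Sum>m=1..N+1. (-1)^(m+1) / (real m * real (m+j))) + (-1)^(N+3) / (real (N+2) * real (N+2+j))"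
    by (simp add: power_add algebra_simps)
  have h: "(harm (N+2)::real) = harm (N+1) + 1 / real (N+2)"
  proof -
    have "(harm (Suc (Suc N)) :: real) = harm (Suc N) + inverse (of_nat (Suc (Suc N)))" by (rule harm_Suc)
    then show ?thesis by (simp add: divide_inverse)
  qed
  have key: "(-1)^(N+2) * harm (N+1) / real (N+1+j) + (-1)^(N+2) * harm (N+1) / real (N+2+j)
     = (-1)^(N+3) / (real (N+2) * real (N+2+j)) + (-1)^(Suc N+1) * harm (Suc N+1) / real (Suc N+1+j)
       - (-1)^(N+1) * harm (N+1) / real (N+1+j)"
  proof -
    have p: "(-1::real)^(N+2) = (-1)^N" "(-1::real)^(N+3) = - ((-1)^N)" "(-1::real)^(Suc N+1) = (-1)^N"
       "(-1::real)^(N+1) = - ((-1)^N)"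
      by (simp_all add: power_add)
    have hh: "harm (Suc N + 1) = harm (N+1) + 1 / real (N+2)" using h by simp
    have q: "Suc N+1+j = N+2+j" by simp
    show ?thesis unfolding p hh q
      by (rule aux) simp_all
  qed
  show ?case
    unfolding e1 e2 e3
    using Suc key by linarith

qed

lemma Qsplit: assumes "j > 0"
  shows "(\<Sum>m=1..M. (-1)^(m+1) / (real m * real (m+j))) =
         (1 / real j) * (Alt M - (\<Sum>m=1..M. (-1)^(m+1) / real (m+j)))"
proof -
  have "(\<Sum>m=1..M. (-1)^(m+1) / (real m * real (m+j))) =
        (\<Sum>m=1..M. (1 / real j) * ((-1)^(m+1) / real m - (-1)^(m+1) / real (m+j)))"
    by (rule sum.cong) (use assms in \<open>auto simp: field_simps\<close>)
  also have "\<dots> = (1 / real j) * (Alt M - (\<Sum>m=1..M. (-1)^(m+1) / real (m+j)))"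
    unfolding Alt_def sum_subtractf[symmetric] sum_distrib_left by (rule refl)
  finally show ?thesis .
qed

lemma shiftsum: "(\<Sum>m=1..M. (-1)^(m+1) / real (m+j)) = (-1)^j * (Alt (M+j) - Alt j)"
proof (induction M)
  case 0
  then show ?case by simp
next
  case (Suc M)
  have "Alt (Suc M + j) = Alt (M+j) + (-1)^(M+j+2) / real (Suc M + j)"
    by (simp add: Alt_def)
  moreover have "(-1::real)^j * (-1)^(M+j+2) = (-1)^(M+2)"
  proof -
    have "(-1::real)^j * (-1)^(M+j+2) = (-1)^(M+2) * ((-1)^j * (-1)^j)"
      by (simp add: power_add)
    also have "(-1::real)^j * (-1)^j = 1"
      by (simp flip: power_mult_distrib)
    finally show ?thesis by simp
  qed
  ultimately show ?case using Suc
    by (simp add: algebra_simps)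
qed

lemma telescope: "PP N 1 - (-1)^k * PP N (k+1) = (\<Sum>j=1..k. (-1)^(j+1) * (PP N j + PP N (Suc j)))"
proof (induction k)
  case 0
  then show ?case by simp
next
  case (Suc k)
  then show ?case by (simp add: algebra_simps)
qed

lemma oddsum: "(\<Sum>j=1..2*n. ((-1)^(j+1) + 1) / real j) = 2 * (\<Sum>k<n. 1 / (2 * real k + 1))"
proof (induction n)
  case 0
  then show ?case by simp
next
  case (Suc n)
  have "{1..2 * Suc n} = insert (2*n+2) (insert (2*n+1) {1..2*n})" by auto
  then have "(\<Sum>j=1..2*Suc n. ((-1::real)^(j+1) + 1) / real j) =
     ((-1)^(2*n+3) + 1) / real (2*n+2) + (((-1)^(2*n+2) + 1) / real (2*n+1) + (\<Sum>j=1..2*n. ((-1)^(j+1) + 1) / real j))"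
    by (simp add: eval_nat_numeral)
  also have "\<dots> = 2 / real (2*n+1) + (\<Sum>j=1..2*n. ((-1)^(j+1) + 1) / real j)"
    by (simp add: power_add)
  finally show ?case using Suc by (simp add: field_simps)
qed

lemma harm_over: "(\<lambda>N. harm (N+1) / real (N+1+j)) \<longlonglongrightarrow> (0::real)"
proof -
  have a: "(\<lambda>N. harm N - ln (real N)) \<longlonglongrightarrow> (euler_mascheroni::real)"
    by (rule euler_mascheroni_LIMSEQ)
  have a': "(\<lambda>N. harm (N+1) - ln (real (N+1))) \<longlonglongrightarrow> (euler_mascheroni::real)"
    using LIMSEQ_ignore_initial_segment[OF a, of 1] by simp
  have b: "(\<lambda>N. 1 / real (N+1+j)) \<longlonglongrightarrow> (0::real)"
    by real_asymp
  have c: "(\<lambda>N. ln (real (N+1)) / real (N+1+j)) \<longlonglongrightarrow> (0::real)"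
    by real_asymp
  have "(\<lambda>N. (harm (N+1) - ln (real (N+1))) * (1 / real (N+1+j)) + ln (real (N+1)) / real (N+1+j))
        \<longlonglongrightarrow> euler_mascheroni * 0 + 0"
    by (intro tendsto_intros a' b c)
  moreover have eq: "\<And>N. (harm (N+1) - ln (real (N+1))) * (1 / real (N+1+j)) + ln (real (N+1)) / real (N+1+j)
     = (harm (N+1) / real (N+1+j) :: real)"
    by (simp only: times_divide_eq_right mult_1_right add_divide_distrib[symmetric] diff_add_cancel)
  ultimately show ?thesis by (simp only: eq mult_zero_right add_0_left)
qed

lemma Alt_lim: "Alt \<longlonglongrightarrow> ln 2"
proof -
  have "Alt M = (\<Sum>k<M. (-1)^k / real (Suc k))" for M
    unfolding Alt_def sum_bounds_lt_plus1[symmetric, of "\<lambda>k. (-1)^(k+1) / real k"] by simp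
  then have "Alt = (\<lambda>M. (\<Sum>k<M. (-1)^k / real (Suc k)))" by (rule ext)
  then show ?thesis using alternating_harmonic_series_sums by (simp add: sums_def)
qed

lemma Alt_lim_shift: "(\<lambda>N. Alt (N + k)) \<longlonglongrightarrow> ln 2"
  using LIMSEQ_ignore_initial_segment[OF Alt_lim, of k] .

lemma E_lim: "(\<lambda>N. (-1)^(N+1) * harm (N+1) / real (N+1+j)) \<longlonglongrightarrow> (0::real)"
proof (rule tendsto_norm_zero_cancel)
  have "(\<lambda>N. norm ((-1)^(N+1) * harm (N+1) / real (N+1+j) :: real)) = (\<lambda>N. harm (N+1) / real (N+1+j))"
    by (rule ext) (simp add: abs_mult)
  then show "(\<lambda>N. norm ((-1)^(N+1) * harm (N+1) / real (N+1+j) :: real)) \<longlonglongrightarrow> 0"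
    using harm_over[of j] by simp
qed

theorem proposition7:
  fixes n :: nat
  assumes "n \<ge> 1"
  shows "(\<lambda>i. let m = Suc i in
            (-1) ^ (m + 1) * (2 * real n) / (real (m + 1) * real (m + 2 * n + 1)) * harm m)
         sums (2 * ln 2 * (\<Sum>k=0..n-1. 1 / (2 * real k + 1))
               - (\<Sum>j=1..2*n. (1 / real j) * (\<Sum>k=1..j. (-1) ^ (k - 1) / real k)))"
proof -
  define f where "f = (\<lambda>i. let m = Suc i in
            (-1) ^ (m + 1) * (2 * real n) / (real (m + 1) * real (m + 2 * n + 1)) * harm m)"
  define T where "T = (\<lambda>N j. (-1)^(j+1) * ((1 / real j) * (Alt (N+1) - (-1)^j * (Alt (N+1+j) - Alt j))
                       + (-1)^(N+1) * harm (N+1) / real (N+1+j)))"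
  have ps: "(\<Sum>i<N. f i) = (\<Sum>j=1..2*n. T N j)" for N
  proof -
    have "(\<Sum>i<N. f i) = (\<Sum>m=1..N. (-1) ^ (m + 1) * (2 * real n) / (real (m + 1) * real (m + 2 * n + 1)) * harm m)"
      unfolding f_def Let_def by (rule sum_bounds_lt_plus1)
    also have "\<dots> = (\<Sum>m=1..N. (-1)^(m+1) * harm m / real (m+1) - (-1)^(m+1) * harm m / real (m + (2*n+1)))"
      by (rule sum.cong) (auto simp: field_simps)
    also have "\<dots> = PP N 1 - PP N (2*n+1)"
      unfolding PP_def sum_subtractf by (rule refl)
    also have "\<dots> = (\<Sum>j=1..2*n. (-1)^(j+1) * (PP N j + PP N (Suc j)))"
      using telescope[of N "2*n"] by simp
    also have "\<dots> = (\<Sum>j=1..2*n. T N j)"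
    proof (rule sum.cong)
      fix j assume "j \<in> {1..2*n}"
      then have j: "j > 0" by auto
      show "(-1)^(j+1) * (PP N j + PP N (Suc j)) = T N j"
        unfolding T_def PQ Qsplit[OF j] shiftsum by (simp add: add_ac)
    qed simp
    finally show ?thesis .
  qed
  define L where "L = (\<lambda>j. (-1)^(j+1) * ((1 / real j) * (ln 2 - (-1)^j * (ln 2 - Alt j)) + 0))"
  have lim: "(\<lambda>N. \<Sum>j=1..2*n. T N j) \<longlonglongrightarrow> (\<Sum>j=1..2*n. L j)"
  proof (rule tendsto_sum)
    fix j
    have a1: "(\<lambda>N. Alt (N+1)) \<longlonglongrightarrow> ln 2" by (rule Alt_lim_shift)
    have a2: "(\<lambda>N. Alt (N+1+j)) \<longlonglongrightarrow> ln 2"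
      using Alt_lim_shift[of "1+j"] by (simp add: add_ac)
    show "(\<lambda>N. T N j) \<longlonglongrightarrow> L j"
      unfolding T_def L_def by (intro tendsto_intros a1 a2 E_lim)
  qed
  have Lval: "L j = ln 2 * (((-1)^(j+1) + 1) / real j) - (1 / real j) * Alt j" for j
  proof -
    have "(-1::real)^(j+1) * (-1)^j = -1"
      by (simp add: power_add flip: power_mult_distrib)
    then show ?thesis unfolding L_def by (simp add: algebra_simps diff_divide_distrib)
  qed
  have "(\<Sum>j=1..2*n. L j) = ln 2 * (\<Sum>j=1..2*n. ((-1)^(j+1) + 1) / real j) - (\<Sum>j=1..2*n. (1 / real j) * Alt j)"
    unfolding Lval by (simp add: sum_subtractf sum_distrib_left)
  also have "\<dots> = 2 * ln 2 * (\<Sum>k=0..n-1. 1 / (2 * real k + 1))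
               - (\<Sum>j=1..2*n. (1 / real j) * (\<Sum>k=1..j. (-1) ^ (k - 1) / real k))"
  proof -
    have "{0..n-1} = {..<n}" using assms by auto
    moreover have "Alt j = (\<Sum>k=1..j. (-1) ^ (k - 1) / real k)" for j
      unfolding Alt_def
    proof (rule sum.cong)
      fix k assume "k \<in> {1..j}"
      then obtain i where "k = Suc i" by (cases k) auto
      then show "(-1)^(k+1) / real k = (-1::real) ^ (k - 1) / real k" by simp
    qed simp
    ultimately show ?thesis using oddsum[of n] by simp
  qed
  finally have "(\<lambda>N. \<Sum>i<N. f i) \<longlonglongrightarrow> 2 * ln 2 * (\<Sum>k=0..n-1. 1 / (2 * real k + 1))
               - (\<Sum>j=1..2*n. (1 / real j) * (\<Sum>k=1..j. (-1) ^ (k - 1) / real k))"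
    using lim ps by simp
  then show ?thesis unfolding sums_def f_def .
qed

end
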